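(* Let $\mathrm{SG}(n)$ denote the Sprague--Grundy value of a pile of $n$ tokens in the game $i\textsc{-Mark}(\{1\},\{2,3\})$. Let $m$ be a nonnegative integer with $m\equiv 5\pmod 6$, and suppose that $\mathrm{SG}(m-i)\neq 2$ for all integers $i$ with $0\le i\le 7$ and $i\le m$. Then $\mathrm{SG}(m)=0$.
   Context: In the impartial game $i\textsc{-Mark}(\{1\},\{2,3\})$, played on a single pile of $n\ge0$ tokens, a move replaces $n$ by $n-1$ (if $n\ge 1$), or by $n/2$ if $n>0$ is even, or by $n/3$ if $n>0$ is divisible by $3$. The Sprague--Grundy value is defined recursively by $\mathrm{SG}(n)=\mathrm{mex}\{\mathrm{SG}(w): w \text{ an option of } n\}$, where $\mathrm{mex}(T)$ is the smallest nonnegative integer not in $T$. *)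

theory Defs
  imports Main
begin

definition mex :: "nat set \<Rightarrow> nat" where
  "mex T = (LEAST k. k \<notin> T)"

definition options :: "nat \<Rightarrow> nat set" where
  "options n = {w. (n \<ge> 1 \<and> w = n - 1) \<or> (n > 0 \<and> 2 dvd n \<and> w = n div 2)
                   \<or> (n > 0 \<and> 3 dvd n \<and> w = n div 3)}"

function SG :: "nat \<Rightarrow> nat" where
  "SG n = mex (SG ` options n)"
  by auto
termination
proof (relation "measure id")
  show "wf (measure id)" by simp
next
  fix n w assume "w \<in> options n"
  then show "(w, n) \<in> measure id" by (auto simp: options_def)
qed

end

theory Submission
  imports Defs
begin

declare SG.simps[simp del]

lemma fin_opts: "finite (options n)"
proof -
  have "options n \<subseteq> {..n}" by (auto simp: options_def)
  then show ?thesis using finite_subset by blast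
qed

lemma L1: "w \<in> options n \<Longrightarrow> SG w \<noteq> SG n"
proof -
  assume w: "w \<in> options n"
  have fin: "finite (SG ` options n)" using fin_opts by simp
  have "\<exists>k. k \<notin> SG ` options n"
    using fin by (meson ex_new_if_finite infinite_UNIV_nat)
  then have "SG n \<notin> SG ` options n"
    by (subst SG.simps) (unfold mex_def, rule LeastI_ex)
  then show ?thesis using w by (metis image_eqI)
qed

lemma L2: "j < SG n \<Longrightarrow> \<exists>w\<in>options n. SG w = j"
proof -
  assume "j < SG n"
  then have "j < (LEAST k. k \<notin> SG ` options n)" by (metis SG.simps mex_def)
  then have "j \<in> SG ` options n" using not_less_Least by blast
  then show ?thesis by auto
qed

lemma single: "odd n \<Longrightarrow> \<not> 3 dvd n \<Longrightarrow> n > 0 \<Longrightarrow> SG n \<noteq> 0 \<Longrightarrow> SG (n - 1) = 0"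
proof -
  assume a: "odd n" "\<not> 3 dvd n" "n > 0" "SG n \<noteq> 0"
  then obtain w where "w \<in> options n" "SG w = 0" using L2[of 0 n] by auto
  moreover have "options n = {n - 1}" using a by (auto simp: options_def)
  ultimately show ?thesis by auto
qed

lemma two_opts:
  assumes "options n \<subseteq> {a, b}" shows "SG n \<le> 2"
proof (rule ccontr)
  assume "\<not> SG n \<le> 2"
  then obtain w0 w1 w2 where "w0 \<in> options n" "SG w0 = 0" "w1 \<in> options n" "SG w1 = 1"
    "w2 \<in> options n" "SG w2 = 2" using L2[of 0 n] L2[of 1 n] L2[of 2 n] by force
  then have "w0 \<noteq> w1" "w0 \<noteq> w2" "w1 \<noteq> w2" by auto
  then show False using assms \<open>w0 \<in> options n\<close> \<open>w1 \<in> options n\<close> \<open>w2 \<in> options n\<close> by blast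
qed

theorem mainTheorem7:
  fixes m :: nat
  assumes "m mod 6 = 5"
    and "\<forall>i::nat. i \<le> 7 \<and> i \<le> m \<longrightarrow> SG (m - i) \<noteq> 2"
  shows "SG m = 0"
proof (rule ccontr)
  assume H: "SG m \<noteq> 0"
  obtain k where m: "m = 6*k+5" using assms(1) by (metis mod_div_mult_eq add.commute mult.commute)
  have n2: "SG (6*k+3) \<noteq> 2" "SG (6*k+2) \<noteq> 2" 
  proof -
    have "SG (m-2) \<noteq> 2" "SG (m-3) \<noteq> 2" using assms(2)[rule_format, of 2] assms(2)[rule_format, of 3] m by simp_all
    moreover have "m-2 = 6*k+3" "m-3 = 6*k+2" using m by auto
    ultimately show "SG (6*k+3) \<noteq> 2" "SG (6*k+2) \<noteq> 2" by auto
  qed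
  have a1: "SG (6*k+4) = 0" proof -
    have "odd (6*k+5)" "\<not> 3 dvd (6*k+5)" by presburger+
    then have "SG (6*k+5 - 1) = 0" using single[of "6*k+5"] H m by simp
    moreover have "6*k+5 - 1 = 6*k+4" by simp
    ultimately show ?thesis by metis
  qed
  have "6*k+3 \<in> options (6*k+4)" "3*k+2 \<in> options (6*k+4)" by (auto simp: options_def)
  then have a2nz: "SG (6*k+3) \<noteq> 0" and t2: "SG (3*k+2) \<noteq> 0" using L1 a1 by metis+
  have "options (6*k+3) \<subseteq> {6*k+2, 2*k+1}" by (auto simp: options_def)
  then have "SG (6*k+3) \<le> 2" by (rule two_opts)
  then have a2: "SG (6*k+3) = 1" using a2nz n2 by linarith
  have "6*k+2 \<in> options (6*k+3)" by (auto simp: options_def)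
  then have a3n1: "SG (6*k+2) \<noteq> 1" using L1 a2 by metis
  have "options (6*k+2) \<subseteq> {6*k+1, 3*k+1}" by (auto simp: options_def) presburger+
  then have "SG (6*k+2) \<le> 2" by (rule two_opts)
  then have a3: "SG (6*k+2) = 0" using a3n1 n2 by linarith
  have "6*k+1 \<in> options (6*k+2)" "3*k+1 \<in> options (6*k+2)" by (auto simp: options_def)
  then have a4: "SG (6*k+1) \<noteq> 0" and t1: "SG (3*k+1) \<noteq> 0" using L1 a3 by metis+
  have a5: "SG (6*k) = 0" proof -
    have "odd (6*k+1)" "\<not> 3 dvd (6*k+1)" by presburger+
    then have "SG (6*k+1 - 1) = 0" using single[of "6*k+1"] a4 by simp
    moreover have "6*k+1 - 1 = 6*k" by simp
    ultimately show ?thesis by metis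
  qed
  show False
  proof (cases "k = 0")
    case True
    have "options 2 = {1}" by (auto simp: options_def)
    moreover have "SG 2 \<noteq> 0" proof -
      have "3*k+2 = 2" using True by simp
      then show ?thesis using t2 by metis
    qed
    ultimately obtain w where "w \<in> {1::nat}" "SG w = 0" using L2[of 0 2] by auto
    moreover have "3*k+1 = 1" using True by simp
    ultimately show False using t1 by (metis singletonD)
  next
    case False
  have "3*k \<in> options (6*k)" using False by (auto simp: options_def)
  then have t0: "SG (3*k) \<noteq> 0" using L1 a5 by metis
  show False
  proof (cases "even k")
    case True
    have "SG (3*k) = 0"
    proof -
      have "odd (3*k+1)" "\<not> 3 dvd (3*k+1)" using True by presburger+
      then have "SG (3*k+1 - 1) = 0" using single[of "3*k+1"] t1 by simp
      moreover have "3*k+1 - 1 = 3*k" by simp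
      ultimately show ?thesis by metis
    qed
    then show False using t0 by simp
  next
    case False
    have "SG (3*k+1) = 0"
    proof -
      have "odd (3*k+2)" "\<not> 3 dvd (3*k+2)" using False by presburger+
      then have "SG (3*k+2 - 1) = 0" using single[of "3*k+2"] t2 by simp
      moreover have "3*k+2 - 1 = 3*k+1" by simp
      ultimately show ?thesis by metis
    qed
    then show False using t1 by simp
  qed
  qed
qed

end
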